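(* Let $X$ be a normed space and $Y$ a Banach space, and let $l\in\{-1,1\}$. Suppose that an odd mapping $f:X\to Y$ satisfies $\|D_f(x,y)\|\le\phi(x,y)$ for all $x,y\in X$, where $\phi:X\times X\to[0,\infty)$ is a function such that $$\sum_{i=1}^{\infty}2^{il}\phi\left(\frac{x}{2^{il}},\frac{x}{2^{il}}\right)<\infty$$ for all $x\in X$ and $\lim_{n\to\infty}2^{ln}\phi\left(\frac{x}{2^{ln}},\frac{y}{2^{ln}}\right)=0$ for all $x,y\in X$. Then the limit $$A(x)=\lim_{n\to\infty}2^{ln}\left[f\left(\frac{x}{2^{l(n-l)}}\right)-8f\left(\frac{x}{2^{ln}}\right)\right]$$ exists for all $x\in X$, and $A:X\to Y$ is the unique additive function which satisfies $$3A(x+3y)-A(3x+y)=12[A(x+y)+A(x-y)]-16[A(x)+A(y)]+12A(2y)-4A(2x)\quad(x,y\in X)$$ and $$\|f(2x)-8f(x)-A(x)\|\le\frac12\sum_{i=\frac{|l-1|}{2}}^{\infty}2^{il}\phi\left(\frac{x}{2^{l(i+l)}},\frac{x}{2^{l(i+l)}}\right)$$ for all $x\in X$ (the summation starts at $i=0$ if $l=1$ and at $i=1$ if $l=-1$).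
   Context: For a mapping $f:X\to Y$ define $$D_f(x,y)=3f(x+3y)-f(3x+y)-12[f(x+y)+f(x-y)]+16[f(x)+f(y)]-12f(2y)+4f(2x)$$ for $x,y\in X$. A function $g:X\to Y$ is additive if $g(x+y)=g(x)+g(y)$ for all $x,y\in X$. *)

theory Defs
  imports "HOL-Analysis.Analysis"
begin

definition Dop :: "('a::real_vector \<Rightarrow> 'b::real_vector) \<Rightarrow> 'a \<Rightarrow> 'a \<Rightarrow> 'b" where
  "Dop f x y =
     3 *\<^sub>R f (x + 3 *\<^sub>R y) - f (3 *\<^sub>R x + y)
     - 12 *\<^sub>R (f (x + y) + f (x - y)) + 16 *\<^sub>R (f x + f y)
     - 12 *\<^sub>R f (2 *\<^sub>R y) + 4 *\<^sub>R f (2 *\<^sub>R x)"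

end

theory Submission
  imports Defs
begin


lemma tail_zero:
  fixes f :: "nat \<Rightarrow> real"
  assumes "summable f"
  shows "(\<lambda>k. \<Sum>i. f (i + k)) \<longlonglongrightarrow> 0"
proof -
  have "(\<lambda>k. \<Sum>i. f (i + k)) = (\<lambda>k. suminf f - (\<Sum>i<k. f i))"
    using suminf_split_initial_segment[OF assms] by (auto simp: algebra_simps)
  moreover have "(\<lambda>k. suminf f - (\<Sum>i<k. f i)) \<longlonglongrightarrow> suminf f - suminf f"
    by (intro tendsto_intros summable_LIMSEQ assms)
  ultimately show ?thesis by simp
qed

lemma hyers:
  fixes h :: "'a::real_normed_vector \<Rightarrow> 'b::banach"
  assumes r: "r > 0"
    and err: "\<And>x. norm (h x - r *\<^sub>R h (x /\<^sub>R r)) \<le> \<psi> x"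
    and summ: "\<And>x. summable (\<lambda>i. r^i * \<psi> (x /\<^sub>R r^i))"
  shows "\<exists>A. (\<forall>x. (\<lambda>n. r^n *\<^sub>R h (x /\<^sub>R r^n)) \<longlonglongrightarrow> A x)
           \<and> (\<forall>x. norm (h x - A x) \<le> (\<Sum>i. r^i * \<psi> (x /\<^sub>R r^i)))"
proof -
  define d where "d x i = r^i *\<^sub>R h (x /\<^sub>R r^i) - r^(Suc i) *\<^sub>R h (x /\<^sub>R r^(Suc i))" for x i
  have nd: "norm (d x i) \<le> r^i * \<psi> (x /\<^sub>R r^i)" for x i
  proof -
    have "d x i = r^i *\<^sub>R (h (x /\<^sub>R r^i) - r *\<^sub>R h ((x /\<^sub>R r^i) /\<^sub>R r))"
      using r by (simp add: d_def algebra_simps)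
    then have "norm (d x i) = r^i * norm (h (x /\<^sub>R r^i) - r *\<^sub>R h ((x /\<^sub>R r^i) /\<^sub>R r))"
      using r by simp
    also have "\<dots> \<le> r^i * \<psi> (x /\<^sub>R r^i)"
      by (rule mult_left_mono[OF err]) (use r in auto)
    finally show ?thesis .
  qed
  have sn: "summable (\<lambda>i. norm (d x i))" for x
    by (rule summable_comparison_test'[OF summ[of x]]) (use nd in auto)
  have sd: "summable (d x)" for x using sn summable_norm_cancel by blast
  define A where "A x = h x - suminf (d x)" for x
  have "(\<lambda>n. r^n *\<^sub>R h (x /\<^sub>R r^n)) \<longlonglongrightarrow> A x" for x
  proof -
    have eq: "r^n *\<^sub>R h (x /\<^sub>R r^n) = h x - (\<Sum>i<n. d x i)" for n
      unfolding d_def by (subst sum_lessThan_telescope'[where f="\<lambda>i. r^i *\<^sub>R h (x /\<^sub>R r^i)"]) simp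
    show ?thesis unfolding eq A_def by (intro tendsto_intros summable_LIMSEQ sd)
  qed
  moreover have "norm (h x - A x) \<le> (\<Sum>i. r^i * \<psi> (x /\<^sub>R r^i))" for x
  proof -
    have "norm (h x - A x) = norm (suminf (d x))" by (simp add: A_def)
    also have "\<dots> \<le> (\<Sum>i. norm (d x i))" by (rule summable_norm[OF sn])
    also have "\<dots> \<le> (\<Sum>i. r^i * \<psi> (x /\<^sub>R r^i))"
      by (rule suminf_le[OF nd sn summ])
    finally show ?thesis .
  qed
  ultimately show ?thesis by blast
qed

lemma unique:
  fixes A B h :: "'a::real_normed_vector \<Rightarrow> 'b::banach"
  assumes r: "r > 0"
    and hA: "\<And>x. A x = r *\<^sub>R A (x /\<^sub>R r)"
    and hB: "\<And>x. B x = r *\<^sub>R B (x /\<^sub>R r)"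
    and bA: "\<And>x. norm (h x - A x) \<le> (\<Sum>i. r^i * \<psi> (x /\<^sub>R r^i))"
    and bB: "\<And>x. norm (h x - B x) \<le> (\<Sum>i. r^i * \<psi> (x /\<^sub>R r^i))"
    and summ: "\<And>x. summable (\<lambda>i. r^i * \<psi> (x /\<^sub>R r^i))"
  shows "A = B"
proof
  fix x
  have pA: "A x = r^n *\<^sub>R A (x /\<^sub>R r^n)" for n
  proof (induction n)
    case (Suc n)
    have "A (x /\<^sub>R r^n) = r *\<^sub>R A ((x /\<^sub>R r^n) /\<^sub>R r)" by (rule hA)
    then show ?case using Suc r by (simp add: mult.commute)
  qed simp
  have pB: "B x = r^n *\<^sub>R B (x /\<^sub>R r^n)" for n
  proof (induction n)
    case (Suc n)
    have "B (x /\<^sub>R r^n) = r *\<^sub>R B ((x /\<^sub>R r^n) /\<^sub>R r)" by (rule hB)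
    then show ?case using Suc r by (simp add: mult.commute)
  qed simp
  define t where "t n = (\<Sum>i. r^(i+n) * \<psi> (x /\<^sub>R r^(i+n)))" for n
  have t0: "t \<longlonglongrightarrow> 0" unfolding t_def by (rule tail_zero[OF summ])
  have le: "norm (A x - B x) \<le> 2 * t n" for n
  proof -
    let ?y = "x /\<^sub>R r^n"
    have "A x - B x = r^n *\<^sub>R ((h ?y - B ?y) - (h ?y - A ?y))"
      by (subst pA[of n], subst pB[of n]) (simp add: algebra_simps)
    then have "norm (A x - B x) = r^n * norm ((h ?y - B ?y) - (h ?y - A ?y))"
      using r by simp
    also have "\<dots> \<le> r^n * (norm (h ?y - B ?y) + norm (h ?y - A ?y))"
      using r by (intro mult_left_mono norm_triangle_ineq4) auto
    also have "\<dots> \<le> r^n * (2 * (\<Sum>i. r^i * \<psi> (?y /\<^sub>R r^i)))"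
      using r bA[of ?y] bB[of ?y] by (intro mult_left_mono) auto
    also have "\<dots> = 2 * (\<Sum>i. r^n * (r^i * \<psi> (?y /\<^sub>R r^i)))"
      using suminf_mult[OF summ[of ?y], of "r^n"] by simp
    also have "\<dots> = 2 * t n"
      unfolding t_def using r by (simp add: power_add mult_ac)
    finally show ?thesis .
  qed
  have "norm (A x - B x) \<le> 0"
    using le by (intro LIMSEQ_le_const[OF tendsto_mult_right_zero[OF t0, of 2]]) auto
  then show "A x = B x" by simp
qed



definition lc :: "real\<Rightarrow>real\<Rightarrow>real\<Rightarrow>real\<Rightarrow>real\<Rightarrow>real\<Rightarrow>'b::real_vector\<Rightarrow>'b\<Rightarrow>'b\<Rightarrow>'b\<Rightarrow>'b\<Rightarrow>'b\<Rightarrow>'b" where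
 "lc k1 k2 k3 k4 k5 k6 a b c d e g = k1 *\<^sub>R a + k2 *\<^sub>R b + k3 *\<^sub>R c + k4 *\<^sub>R d + k5 *\<^sub>R e + k6 *\<^sub>R g"
lemma lc_add: "lc k1 k2 k3 k4 k5 k6 a b c d e g + lc m1 m2 m3 m4 m5 m6 a b c d e g
   = lc (k1+m1) (k2+m2) (k3+m3) (k4+m4) (k5+m5) (k6+m6) a b c d e g"
  by (simp add: lc_def algebra_simps)
lemma lc_scale: "t *\<^sub>R lc k1 k2 k3 k4 k5 k6 a b c d e g = lc (t*k1) (t*k2) (t*k3) (t*k4) (t*k5) (t*k6) a b c d e g"
  by (simp add: lc_def algebra_simps)

lemma lin1:
  fixes a b c d e g :: "'b::real_vector"
  assumes "3 *\<^sub>R a - b - 12 *\<^sub>R c - 12 *\<^sub>R d + 12 *\<^sub>R e - 4 *\<^sub>R g = 0"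
    and "3 *\<^sub>R b - a - 12 *\<^sub>R c + 12 *\<^sub>R d - 4 *\<^sub>R e + 12 *\<^sub>R g = 0"
  shows "a = 6 *\<^sub>R c + 3 *\<^sub>R d - 4 *\<^sub>R e"
proof -
  have 1: "lc 3 (-1) (-12) (-12) 12 (-4) a b c d e g = 0" using assms(1) by (simp add: lc_def algebra_simps)
  have 2: "lc (-1) 3 (-12) 12 (-4) 12 a b c d e g = 0" using assms(2) by (simp add: lc_def algebra_simps)
  have "lc 8 0 (-48) (-24) 32 0 a b c d e g = 3 *\<^sub>R lc 3 (-1) (-12) (-12) 12 (-4) a b c d e g + lc (-1) 3 (-12) 12 (-4) 12 a b c d e g"
    unfolding lc_scale lc_add by simp
  then have "lc 8 0 (-48) (-24) 32 0 a b c d e g = 0" using 1 2 by simp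
  then have "8 *\<^sub>R (a - (6 *\<^sub>R c + 3 *\<^sub>R d - 4 *\<^sub>R e)) = 0"
    by (simp add: lc_def algebra_simps)
  then show ?thesis by simp
qed

lemma additive_of_Dop:
  fixes A :: "'a::real_normed_vector \<Rightarrow> 'b::real_normed_vector"
  assumes odd: "\<And>x. A (- x) = - A x"
    and dbl: "\<And>x. A (2 *\<^sub>R x) = 2 *\<^sub>R A x"
    and D: "\<And>x y. Dop A x y = 0"
  shows "Modules.additive A"
proof -
  have A0: "A 0 = 0" using dbl[of 0] by (metis add_cancel_right_right scaleR_2 scaleR_zero_right)
  have half: "A ((1/2) *\<^sub>R z) = (1/2) *\<^sub>R A z" for z
    using dbl[of "(1/2) *\<^sub>R z"] by simp
  have star: "A (2 *\<^sub>R u - v) = 6 *\<^sub>R A u + 3 *\<^sub>R A v - 4 *\<^sub>R A (u + v)" for u v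
  proof -
    define x where "x = (1/2) *\<^sub>R (u + v)"
    define y where "y = (1/2) *\<^sub>R (u - v)"
    have e1: "x + 3 *\<^sub>R y = 2 *\<^sub>R u - v" "3 *\<^sub>R x + y = 2 *\<^sub>R u + v"
      "x + y = u" "x - y = v" "y - x = - v" "2 *\<^sub>R x = u + v" "2 *\<^sub>R y = u - v"
      "y + 3 *\<^sub>R x = 2 *\<^sub>R u + v" "3 *\<^sub>R y + x = 2 *\<^sub>R u - v" "y + x = u"
      unfolding x_def y_def by norm+
    have hx: "A x = (1/2) *\<^sub>R A (u + v)" unfolding x_def by (rule half)
    have hy: "A y = (1/2) *\<^sub>R A (u - v)" unfolding y_def by (rule half)
    have E1: "3 *\<^sub>R A (2 *\<^sub>R u - v) - A (2 *\<^sub>R u + v) - 12 *\<^sub>R A u - 12 *\<^sub>R A v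
               + 12 *\<^sub>R A (u + v) - 4 *\<^sub>R A (u - v) = 0"
    proof -
      have "Dop A x y = 0" by (rule D)
      then have "3 *\<^sub>R A (2 *\<^sub>R u - v) - A (2 *\<^sub>R u + v) - 12 *\<^sub>R (A u + A v)
         + 16 *\<^sub>R ((1/2) *\<^sub>R A (u + v) + (1/2) *\<^sub>R A (u - v)) - 12 *\<^sub>R A (u - v) + 4 *\<^sub>R A (u + v) = 0"
        unfolding Dop_def e1 hx hy .
      moreover have "3 *\<^sub>R A (2 *\<^sub>R u - v) - A (2 *\<^sub>R u + v) - 12 *\<^sub>R (A u + A v)
         + 16 *\<^sub>R ((1/2) *\<^sub>R A (u + v) + (1/2) *\<^sub>R A (u - v)) - 12 *\<^sub>R A (u - v) + 4 *\<^sub>R A (u + v) =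
         3 *\<^sub>R A (2 *\<^sub>R u - v) - A (2 *\<^sub>R u + v) - 12 *\<^sub>R A u - 12 *\<^sub>R A v
               + 12 *\<^sub>R A (u + v) - 4 *\<^sub>R A (u - v)" by norm
      ultimately show ?thesis by simp
    qed
    have E2: "3 *\<^sub>R A (2 *\<^sub>R u + v) - A (2 *\<^sub>R u - v) - 12 *\<^sub>R A u + 12 *\<^sub>R A v
               - 4 *\<^sub>R A (u + v) + 12 *\<^sub>R A (u - v) = 0"
    proof -
      have "Dop A y x = 0" by (rule D)
      then have "3 *\<^sub>R A (2 *\<^sub>R u + v) - A (2 *\<^sub>R u - v) - 12 *\<^sub>R (A u + - A v)
         + 16 *\<^sub>R ((1/2) *\<^sub>R A (u - v) + (1/2) *\<^sub>R A (u + v)) - 12 *\<^sub>R A (u + v) + 4 *\<^sub>R A (u - v) = 0"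
        unfolding Dop_def e1 hx hy odd .
      moreover have "3 *\<^sub>R A (2 *\<^sub>R u + v) - A (2 *\<^sub>R u - v) - 12 *\<^sub>R (A u + - A v)
         + 16 *\<^sub>R ((1/2) *\<^sub>R A (u - v) + (1/2) *\<^sub>R A (u + v)) - 12 *\<^sub>R A (u + v) + 4 *\<^sub>R A (u - v) =
         3 *\<^sub>R A (2 *\<^sub>R u + v) - A (2 *\<^sub>R u - v) - 12 *\<^sub>R A u + 12 *\<^sub>R A v
               - 4 *\<^sub>R A (u + v) + 12 *\<^sub>R A (u - v)" by norm
      ultimately show ?thesis by simp
    qed
    show ?thesis by (rule lin1[OF E1 E2])
  qed
  have trip: "A (3 *\<^sub>R w) = 3 *\<^sub>R A w" for w
  proof -
    have "A (2 *\<^sub>R w - - w) = 6 *\<^sub>R A w + 3 *\<^sub>R A (- w) - 4 *\<^sub>R A (w + - w)" by (rule star)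
    moreover have "2 *\<^sub>R w - - w = 3 *\<^sub>R w" by norm
    moreover have "6 *\<^sub>R A w + 3 *\<^sub>R A (- w) - 4 *\<^sub>R A (w + - w) = 3 *\<^sub>R A w"
      unfolding odd by (simp add: A0) norm
    ultimately show ?thesis by simp
  qed
  have third: "A ((1/3) *\<^sub>R z) = (1/3) *\<^sub>R A z" for z
    using trip[of "(1/3) *\<^sub>R z"] by simp
  show ?thesis
  proof
    fix p q :: 'a
    have s1: "A (2 *\<^sub>R q - p) = 6 *\<^sub>R A q + 3 *\<^sub>R A p - 4 *\<^sub>R A (q + p)" by (rule star)
    have s2: "A (2 *\<^sub>R ((1/3) *\<^sub>R (p + q)) - (1/3) *\<^sub>R (2 *\<^sub>R q - p)) =
       6 *\<^sub>R A ((1/3) *\<^sub>R (p + q)) + 3 *\<^sub>R A ((1/3) *\<^sub>R (2 *\<^sub>R q - p))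
       - 4 *\<^sub>R A ((1/3) *\<^sub>R (p + q) + (1/3) *\<^sub>R (2 *\<^sub>R q - p))" by (rule star)
    have q1: "2 *\<^sub>R ((1/3) *\<^sub>R (p + q)) - (1/3) *\<^sub>R (2 *\<^sub>R q - p) = p" by norm
    have q2: "(1/3) *\<^sub>R (p + q) + (1/3) *\<^sub>R (2 *\<^sub>R q - p) = q" by norm
    have s3: "A p = 6 *\<^sub>R ((1/3) *\<^sub>R A (p + q)) + 3 *\<^sub>R ((1/3) *\<^sub>R A (2 *\<^sub>R q - p)) - 4 *\<^sub>R A q"
      using s2 unfolding q1 q2 third .
    have "A p = 6 *\<^sub>R ((1/3) *\<^sub>R A (p + q)) + 3 *\<^sub>R ((1/3) *\<^sub>R (6 *\<^sub>R A q + 3 *\<^sub>R A p - 4 *\<^sub>R A (q + p))) - 4 *\<^sub>R A q"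
      using s3 unfolding s1 .
    then have "A p - (6 *\<^sub>R ((1/3) *\<^sub>R A (p + q)) + 3 *\<^sub>R ((1/3) *\<^sub>R (6 *\<^sub>R A q + 3 *\<^sub>R A p - 4 *\<^sub>R A (q + p))) - 4 *\<^sub>R A q) = 0"
      by simp
    moreover have "A p - (6 *\<^sub>R ((1/3) *\<^sub>R A (p + q)) + 3 *\<^sub>R ((1/3) *\<^sub>R (6 *\<^sub>R A q + 3 *\<^sub>R A p - 4 *\<^sub>R A (q + p))) - 4 *\<^sub>R A q)
       = 2 *\<^sub>R (A (p + q) - A p - A q)"
      by (simp add: add.commute) norm
    ultimately have "2 *\<^sub>R (A (p + q) - A p - A q) = 0" by simp
    then have "A (p + q) - A p - A q = 0" by simp
    then show "A (p + q) = A p + A q" by (simp add: algebra_simps)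
  qed
qed



lemma Dop_scale:
  fixes h :: "'a::real_normed_vector \<Rightarrow> 'b::real_normed_vector"
  assumes "t \<noteq> 0"
  shows "Dop (\<lambda>z. c *\<^sub>R h (z /\<^sub>R t)) x y = c *\<^sub>R Dop h (x /\<^sub>R t) (y /\<^sub>R t)"
  unfolding Dop_def by (simp add: algebra_simps)

lemma Dop_g:
  fixes f :: "'a::real_normed_vector \<Rightarrow> 'b::real_normed_vector"
  shows "Dop (\<lambda>z. f (2 *\<^sub>R z) - 8 *\<^sub>R f z) u v = Dop f (2 *\<^sub>R u) (2 *\<^sub>R v) - 8 *\<^sub>R Dop f u v"
  unfolding Dop_def by (simp add: algebra_simps)

lemma Dop_diag:
  fixes f :: "'a::real_normed_vector \<Rightarrow> 'b::real_normed_vector"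
  assumes odd: "\<And>x. f (- x) = - f x"
  shows "Dop f x x = 2 *\<^sub>R ((f (2 *\<^sub>R (2 *\<^sub>R x)) - 8 *\<^sub>R f (2 *\<^sub>R x)) - 2 *\<^sub>R (f (2 *\<^sub>R x) - 8 *\<^sub>R f x))"
proof -
  have f0: "f 0 = 0" using odd[of 0] by (metis minus_zero add.right_inverse scaleR_2 scaleR_eq_0_iff zero_neq_numeral)
  have e: "x + 3 *\<^sub>R x = 2 *\<^sub>R (2 *\<^sub>R x)" "3 *\<^sub>R x + x = 2 *\<^sub>R (2 *\<^sub>R x)" "x + x = 2 *\<^sub>R x" by norm+
  show ?thesis unfolding Dop_def e by (simp add: f0) norm
qed



lemma core:
  fixes f :: "'a::real_normed_vector \<Rightarrow> 'b::banach"
    and \<phi> :: "'a \<Rightarrow> 'a \<Rightarrow> real" and \<psi> :: "'a \<Rightarrow> real"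
  assumes r: "r = 2 \<or> r = 1/2"
    and odd: "\<And>x. f (- x) = - f x"
    and bound: "\<And>x y. norm (Dop f x y) \<le> \<phi> x y"
    and err: "\<And>x. norm ((f (2 *\<^sub>R x) - 8 *\<^sub>R f x) - r *\<^sub>R (f (2 *\<^sub>R (x /\<^sub>R r)) - 8 *\<^sub>R f (x /\<^sub>R r))) \<le> \<psi> x"
    and summ: "\<And>x. summable (\<lambda>i. r^i * \<psi> (x /\<^sub>R r^i))"
    and lim0: "\<And>x y. (\<lambda>n. r^n * \<phi> (x /\<^sub>R r^n) (y /\<^sub>R r^n)) \<longlonglongrightarrow> 0"
  shows "\<exists>A. (\<forall>x. (\<lambda>n. r^n *\<^sub>R (f (2 *\<^sub>R (x /\<^sub>R r^n)) - 8 *\<^sub>R f (x /\<^sub>R r^n))) \<longlonglongrightarrow> A x)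
     \<and> Modules.additive A \<and> (\<forall>x y. Dop A x y = 0)
     \<and> (\<forall>x. norm (f (2 *\<^sub>R x) - 8 *\<^sub>R f x - A x) \<le> (\<Sum>i. r^i * \<psi> (x /\<^sub>R r^i)))
     \<and> (\<forall>B. Modules.additive B \<and> (\<forall>x. norm (f (2 *\<^sub>R x) - 8 *\<^sub>R f x - B x) \<le> (\<Sum>i. r^i * \<psi> (x /\<^sub>R r^i)))
          \<longrightarrow> B = A)"
proof -
  define g where "g x = f (2 *\<^sub>R x) - 8 *\<^sub>R f x" for x
  have rpos: "r > 0" using r by auto
  obtain A where conv: "\<And>x. (\<lambda>n. r^n *\<^sub>R g (x /\<^sub>R r^n)) \<longlonglongrightarrow> A x"
    and bA: "\<And>x. norm (g x - A x) \<le> (\<Sum>i. r^i * \<psi> (x /\<^sub>R r^i))"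
    using hyers[of r g \<psi>, OF rpos _ summ] err unfolding g_def by blast
  have hA: "A x = r *\<^sub>R A (x /\<^sub>R r)" for x
  proof -
    have "(\<lambda>n. r^(Suc n) *\<^sub>R g (x /\<^sub>R r^(Suc n))) \<longlonglongrightarrow> A x"
      using LIMSEQ_Suc[OF conv[of x]] .
    moreover have "(\<lambda>n. r^(Suc n) *\<^sub>R g (x /\<^sub>R r^(Suc n))) = (\<lambda>n. r *\<^sub>R (r^n *\<^sub>R g ((x /\<^sub>R r) /\<^sub>R r^n)))"
      using rpos by (simp add: mult.commute)
    moreover have "(\<lambda>n. r *\<^sub>R (r^n *\<^sub>R g ((x /\<^sub>R r) /\<^sub>R r^n))) \<longlonglongrightarrow> r *\<^sub>R A (x /\<^sub>R r)"
      by (intro tendsto_intros conv)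
    ultimately show ?thesis using LIMSEQ_unique by metis
  qed
  have oddA: "A (- x) = - A x" for x
  proof -
    have "(\<lambda>n. r^n *\<^sub>R g ((- x) /\<^sub>R r^n)) = (\<lambda>n. - (r^n *\<^sub>R g (x /\<^sub>R r^n)))"
      by (simp add: g_def odd algebra_simps)
    then have "(\<lambda>n. r^n *\<^sub>R g ((- x) /\<^sub>R r^n)) \<longlonglongrightarrow> - A x"
      by (simp add: tendsto_minus conv)
    then show ?thesis using conv[of "- x"] LIMSEQ_unique by blast
  qed
  have dblA: "A (2 *\<^sub>R x) = 2 *\<^sub>R A x" for x
    using r
  proof
    assume "r = 2" then show ?thesis using hA[of "2 *\<^sub>R x"] by simp
  next
    assume rr: "r = 1/2"
    have "A x = (1/2) *\<^sub>R A (2 *\<^sub>R x)" using hA[of x] unfolding rr by simp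
    then show ?thesis by simp
  qed
  have DA: "Dop A x y = 0" for x y
  proof -
    define s where "s n = Dop (\<lambda>z. r^n *\<^sub>R g (z /\<^sub>R r^n)) x y" for n
    have "s \<longlonglongrightarrow> Dop A x y"
      unfolding s_def Dop_def by (intro tendsto_intros conv)
    moreover have "s \<longlonglongrightarrow> 0"
    proof (rule Lim_null_comparison)
      let ?b = "\<lambda>n. r^n * \<phi> ((2 *\<^sub>R x) /\<^sub>R r^n) ((2 *\<^sub>R y) /\<^sub>R r^n) + 8 * (r^n * \<phi> (x /\<^sub>R r^n) (y /\<^sub>R r^n))"
      show "?b \<longlonglongrightarrow> 0"
        using tendsto_add[OF lim0[of "2 *\<^sub>R x" "2 *\<^sub>R y"] tendsto_mult_right_zero[OF lim0[of x y], of 8]] by simp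
      show "\<forall>\<^sub>F n in sequentially. norm (s n) \<le> ?b n"
      proof (rule always_eventually, rule allI)
        fix n
        let ?u = "x /\<^sub>R r^n" and ?v = "y /\<^sub>R r^n"
        have "s n = r^n *\<^sub>R Dop g ?u ?v"
          unfolding s_def using rpos by (intro Dop_scale) simp
        also have "Dop g ?u ?v = Dop f (2 *\<^sub>R ?u) (2 *\<^sub>R ?v) - 8 *\<^sub>R Dop f ?u ?v"
          unfolding g_def by (rule Dop_g)
        finally have sn: "s n = r^n *\<^sub>R (Dop f (2 *\<^sub>R ?u) (2 *\<^sub>R ?v) - 8 *\<^sub>R Dop f ?u ?v)" .
        then have "norm (s n) \<le> r^n * (norm (Dop f (2 *\<^sub>R ?u) (2 *\<^sub>R ?v)) + 8 * norm (Dop f ?u ?v))"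
        proof -
          have "norm (Dop f (2 *\<^sub>R ?u) (2 *\<^sub>R ?v) - 8 *\<^sub>R Dop f ?u ?v) \<le> norm (Dop f (2 *\<^sub>R ?u) (2 *\<^sub>R ?v)) + 8 * norm (Dop f ?u ?v)"
            using norm_triangle_ineq4[of "Dop f (2 *\<^sub>R ?u) (2 *\<^sub>R ?v)" "8 *\<^sub>R Dop f ?u ?v"] by simp
          then show ?thesis unfolding sn using rpos by (simp add: mult_left_mono)
        qed
        also have "\<dots> \<le> r^n * (\<phi> (2 *\<^sub>R ?u) (2 *\<^sub>R ?v) + 8 * \<phi> ?u ?v)"
          using rpos bound by (intro mult_left_mono add_mono) auto
        also have "r^n * (\<phi> (2 *\<^sub>R ?u) (2 *\<^sub>R ?v) + 8 * \<phi> ?u ?v) = ?b n"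
        proof -
          have e: "2 *\<^sub>R ?u = (2 *\<^sub>R x) /\<^sub>R r^n" "2 *\<^sub>R ?v = (2 *\<^sub>R y) /\<^sub>R r^n" by auto
          show ?thesis unfolding e by (simp only: distrib_left mult.assoc mult.left_commute[of 8])
        qed
        finally show "norm (s n) \<le> ?b n" .
      qed
    qed
    ultimately show ?thesis using LIMSEQ_unique by blast
  qed
  have addA: "Modules.additive A" by (rule additive_of_Dop[OF oddA dblA DA])
  show ?thesis
  proof (intro exI conjI allI impI)
    fix x show "(\<lambda>n. r^n *\<^sub>R (f (2 *\<^sub>R (x /\<^sub>R r^n)) - 8 *\<^sub>R f (x /\<^sub>R r^n))) \<longlonglongrightarrow> A x"
      using conv[of x] unfolding g_def .
  next
    show "Modules.additive A" by (rule addA)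
  next
    fix x y show "Dop A x y = 0" by (rule DA)
  next
    fix x show "norm (f (2 *\<^sub>R x) - 8 *\<^sub>R f x - A x) \<le> (\<Sum>i. r^i * \<psi> (x /\<^sub>R r^i))"
      using bA[of x] unfolding g_def .
  next
    fix B :: "'a \<Rightarrow> 'b"
    assume H: "Modules.additive B \<and> (\<forall>x. norm (f (2 *\<^sub>R x) - 8 *\<^sub>R f x - B x) \<le> (\<Sum>i. r^i * \<psi> (x /\<^sub>R r^i)))"
    then have addB: "Modules.additive B" and bB: "\<And>x. norm (g x - B x) \<le> (\<Sum>i. r^i * \<psi> (x /\<^sub>R r^i))"
      unfolding g_def by auto
    have B2: "B (2 *\<^sub>R z) = 2 *\<^sub>R B z" for z
      using Modules.additive.add[OF addB, of z z] by (simp add: scaleR_2)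
    have hB: "B x = r *\<^sub>R B (x /\<^sub>R r)" for x
      using r
    proof
      assume "r = 2" then show ?thesis using B2[of "x /\<^sub>R 2"] by simp
    next
      assume rr: "r = 1/2" then show ?thesis using B2[of x] unfolding rr by simp
    qed
    show "B = A" by (rule unique[OF rpos hB hA bB bA summ])
  qed
qed



lemma eqn_of_Dop:
  fixes A :: "'a::real_normed_vector \<Rightarrow> 'b::real_normed_vector"
  assumes "Dop A x y = 0"
  shows "3 *\<^sub>R A (x + 3 *\<^sub>R y) - A (3 *\<^sub>R x + y) =
              12 *\<^sub>R (A (x + y) + A (x - y)) - 16 *\<^sub>R (A x + A y)
              + 12 *\<^sub>R A (2 *\<^sub>R y) - 4 *\<^sub>R A (2 *\<^sub>R x)"
proof -
  have "(3 *\<^sub>R A (x + 3 *\<^sub>R y) - A (3 *\<^sub>R x + y)) - (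
              12 *\<^sub>R (A (x + y) + A (x - y)) - 16 *\<^sub>R (A x + A y)
              + 12 *\<^sub>R A (2 *\<^sub>R y) - 4 *\<^sub>R A (2 *\<^sub>R x)) = Dop A x y"
    unfolding Dop_def by (simp add: algebra_simps)
  then show ?thesis using assms by simp
qed

lemma case_pos:
  fixes f :: "'a::real_normed_vector \<Rightarrow> 'b::banach"
    and \<phi> :: "'a \<Rightarrow> 'a \<Rightarrow> real"
  assumes odd: "\<And>x. f (- x) = - f x"
    and phi_nonneg: "\<And>x y. \<phi> x y \<ge> 0"
    and bound: "\<And>x y. norm (Dop f x y) \<le> \<phi> x y"
    and summ: "\<And>x. summable (\<lambda>i::nat. 2 ^ (Suc i) *
                  \<phi> (x /\<^sub>R 2 ^ (Suc i)) (x /\<^sub>R 2 ^ (Suc i)))"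
    and lim0: "\<And>x y. (\<lambda>n::nat. 2 ^ n *
                  \<phi> (x /\<^sub>R 2 ^ n) (y /\<^sub>R 2 ^ n)) \<longlonglongrightarrow> 0"
  shows "\<exists>A :: 'a \<Rightarrow> 'b.
     (\<forall>x. (\<lambda>n::nat. 2 ^ n *\<^sub>R
              (f (x /\<^sub>R (2 ^ n / 2)) - 8 *\<^sub>R f (x /\<^sub>R 2 ^ n)))
            \<longlonglongrightarrow> A x)
   \<and> Modules.additive A
   \<and> (\<forall>x y. Dop A x y = 0)
   \<and> (\<forall>x. norm (f (2 *\<^sub>R x) - 8 *\<^sub>R f x - A x) \<le>
          1/2 * (\<Sum>i. 2 ^ i * \<phi> (x /\<^sub>R 2 ^ Suc i) (x /\<^sub>R 2 ^ Suc i)))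
   \<and> (\<forall>B :: 'a \<Rightarrow> 'b. Modules.additive B
        \<and> (\<forall>x. norm (f (2 *\<^sub>R x) - 8 *\<^sub>R f x - B x) \<le>
          1/2 * (\<Sum>i. 2 ^ i * \<phi> (x /\<^sub>R 2 ^ Suc i) (x /\<^sub>R 2 ^ Suc i)))
        \<longrightarrow> B = A)"
proof -
  define \<psi> where "\<psi> x = (1/2) * \<phi> (x /\<^sub>R 2) (x /\<^sub>R 2)" for x
  have err: "norm ((f (2 *\<^sub>R x) - 8 *\<^sub>R f x) - 2 *\<^sub>R (f (2 *\<^sub>R (x /\<^sub>R 2)) - 8 *\<^sub>R f (x /\<^sub>R 2))) \<le> \<psi> x" for x
  proof -
    define w where "w = x /\<^sub>R 2"
    have xw: "x = 2 *\<^sub>R w" unfolding w_def by simp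
    have "Dop f w w = 2 *\<^sub>R ((f (2 *\<^sub>R x) - 8 *\<^sub>R f x) - 2 *\<^sub>R (f (2 *\<^sub>R w) - 8 *\<^sub>R f w))"
      unfolding xw by (rule Dop_diag[where f=f, OF odd])
    then have "norm (Dop f w w) = 2 * norm ((f (2 *\<^sub>R x) - 8 *\<^sub>R f x) - 2 *\<^sub>R (f (2 *\<^sub>R w) - 8 *\<^sub>R f w))"
      by (simp only: norm_scaleR abs_numeral)
    moreover have "\<psi> x = (1/2) * \<phi> w w" unfolding \<psi>_def w_def ..
    ultimately show ?thesis using bound[of w w] unfolding w_def[symmetric] by linarith
  qed
  have tm: "2^i * \<psi> (x /\<^sub>R 2^i) = (1/2) * (2 ^ i * \<phi> (x /\<^sub>R 2 ^ Suc i) (x /\<^sub>R 2 ^ Suc i))" for x i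
  proof -
    have e: "(x /\<^sub>R 2^i) /\<^sub>R 2 = x /\<^sub>R 2 ^ Suc i" by (simp add: mult.commute)
    show ?thesis unfolding \<psi>_def e by (rule mult.left_commute)
  qed
  have sm: "summable (\<lambda>i. 2 ^ i * \<phi> (x /\<^sub>R 2 ^ Suc i) (x /\<^sub>R 2 ^ Suc i))" for x
  proof -
    have "(\<lambda>i. 2 ^ i * \<phi> (x /\<^sub>R 2 ^ Suc i) (x /\<^sub>R 2 ^ Suc i)) =
          (\<lambda>i. (1/2) * (2 ^ (Suc i) * \<phi> (x /\<^sub>R 2 ^ (Suc i)) (x /\<^sub>R 2 ^ (Suc i))))" by simp
    then show ?thesis using summable_mult[OF summ[of x], of "1/2"] by simp
  qed
  have summ': "summable (\<lambda>i. (2::real)^i * \<psi> (x /\<^sub>R 2^i))" for x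
    unfolding tm using summable_mult[OF sm[of x], of "1/2"] .
  have S: "(\<Sum>i. (2::real)^i * \<psi> (x /\<^sub>R 2^i)) = 1/2 * (\<Sum>i. 2 ^ i * \<phi> (x /\<^sub>R 2 ^ Suc i) (x /\<^sub>R 2 ^ Suc i))" for x
    unfolding tm by (rule suminf_mult[OF sm])
  have L: "\<And>x y. (\<lambda>n. (2::real)^n * \<phi> (x /\<^sub>R 2^n) (y /\<^sub>R 2^n)) \<longlonglongrightarrow> 0" by (rule lim0)
  obtain A where conv: "\<forall>x. (\<lambda>n. (2::real)^n *\<^sub>R (f (2 *\<^sub>R (x /\<^sub>R 2^n)) - 8 *\<^sub>R f (x /\<^sub>R 2^n))) \<longlonglongrightarrow> A x"
    and addA: "Modules.additive A" and DA: "\<forall>x y. Dop A x y = 0"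
    and bA: "\<forall>x. norm (f (2 *\<^sub>R x) - 8 *\<^sub>R f x - A x) \<le> (\<Sum>i. (2::real)^i * \<psi> (x /\<^sub>R 2^i))"
    and uq: "\<forall>B. Modules.additive B \<and> (\<forall>x. norm (f (2 *\<^sub>R x) - 8 *\<^sub>R f x - B x) \<le> (\<Sum>i. (2::real)^i * \<psi> (x /\<^sub>R 2^i))) \<longrightarrow> B = A"
    using core[where r=2 and f=f and \<phi>=\<phi> and \<psi>=\<psi>, OF disjI1[OF refl] odd bound err summ' L]
    apply -
    apply (erule exE)
    apply (erule conjE)+
    apply (rule that)
        apply assumption+
    done
  have e2: "x /\<^sub>R ((2::real) ^ n / 2) = 2 *\<^sub>R (x /\<^sub>R 2^n)" for x :: 'a and n
  proof -
    have "inverse ((2::real)^n/2) = 2 * inverse (2^n)" by (simp add: inverse_eq_divide)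
    then show ?thesis by (simp only: scaleR_scaleR)
  qed
  show ?thesis
  proof (rule exI[of _ A], intro conjI allI impI)
    fix x show "(\<lambda>n::nat. 2 ^ n *\<^sub>R (f (x /\<^sub>R (2 ^ n / 2)) - 8 *\<^sub>R f (x /\<^sub>R 2 ^ n))) \<longlonglongrightarrow> A x"
      unfolding e2 by (rule conv[rule_format])
  next
    show "Modules.additive A" by (rule addA)
  next
    fix x y show "Dop A x y = 0" by (rule DA[rule_format])
  next
    fix x show "norm (f (2 *\<^sub>R x) - 8 *\<^sub>R f x - A x) \<le> 1/2 * (\<Sum>i. 2 ^ i * \<phi> (x /\<^sub>R 2 ^ Suc i) (x /\<^sub>R 2 ^ Suc i))"
      using bA[rule_format, of x] unfolding S .
  next
    fix B assume H: "Modules.additive B \<and> (\<forall>x. norm (f (2 *\<^sub>R x) - 8 *\<^sub>R f x - B x) \<le>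
          1/2 * (\<Sum>i. 2 ^ i * \<phi> (x /\<^sub>R 2 ^ Suc i) (x /\<^sub>R 2 ^ Suc i)))"
    have "\<forall>x. norm (f (2 *\<^sub>R x) - 8 *\<^sub>R f x - B x) \<le> (\<Sum>i. (2::real)^i * \<psi> (x /\<^sub>R 2^i))"
      using H unfolding S by (rule conjunct2)
    then show "B = A" using uq conjunct1[OF H] by blast
  qed
qed



lemma case_neg:
  fixes f :: "'a::real_normed_vector \<Rightarrow> 'b::banach"
    and \<phi> :: "'a \<Rightarrow> 'a \<Rightarrow> real"
  assumes odd: "\<And>x. f (- x) = - f x"
    and phi_nonneg: "\<And>x y. \<phi> x y \<ge> 0"
    and bound: "\<And>x y. norm (Dop f x y) \<le> \<phi> x y"
    and summ: "\<And>x. summable (\<lambda>i::nat. (1/2) ^ (Suc i) *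
                  \<phi> (x /\<^sub>R (1/2) ^ (Suc i)) (x /\<^sub>R (1/2) ^ (Suc i)))"
    and lim0: "\<And>x y. (\<lambda>n::nat. (1/2) ^ n *
                  \<phi> (x /\<^sub>R (1/2) ^ n) (y /\<^sub>R (1/2) ^ n)) \<longlonglongrightarrow> 0"
  shows "\<exists>A :: 'a \<Rightarrow> 'b.
     (\<forall>x. (\<lambda>n::nat. (1/2) ^ n *\<^sub>R
              (f (x /\<^sub>R (1/2) ^ Suc n) - 8 *\<^sub>R f (x /\<^sub>R (1/2) ^ n)))
            \<longlonglongrightarrow> A x)
   \<and> Modules.additive A
   \<and> (\<forall>x y. Dop A x y = 0)
   \<and> (\<forall>x. norm (f (2 *\<^sub>R x) - 8 *\<^sub>R f x - A x) \<le>
          1/2 * (\<Sum>i. (1/2) ^ Suc i * \<phi> (x /\<^sub>R (1/2) ^ i) (x /\<^sub>R (1/2) ^ i)))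
   \<and> (\<forall>B :: 'a \<Rightarrow> 'b. Modules.additive B
        \<and> (\<forall>x. norm (f (2 *\<^sub>R x) - 8 *\<^sub>R f x - B x) \<le>
          1/2 * (\<Sum>i. (1/2) ^ Suc i * \<phi> (x /\<^sub>R (1/2) ^ i) (x /\<^sub>R (1/2) ^ i)))
        \<longrightarrow> B = A)"
proof -
  define \<psi> where "\<psi> x = (1/4) * \<phi> x x" for x
  have err: "norm ((f (2 *\<^sub>R x) - 8 *\<^sub>R f x) - (1/2::real) *\<^sub>R (f (2 *\<^sub>R (x /\<^sub>R (1/2::real))) - 8 *\<^sub>R f (x /\<^sub>R (1/2::real)))) \<le> \<psi> x" for x
  proof -
    have xx: "x /\<^sub>R (1/2::real) = 2 *\<^sub>R x" by simp
    have D: "Dop f x x = 2 *\<^sub>R ((f (2 *\<^sub>R (2 *\<^sub>R x)) - 8 *\<^sub>R f (2 *\<^sub>R x)) - 2 *\<^sub>R (f (2 *\<^sub>R x) - 8 *\<^sub>R f x))"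
      by (rule Dop_diag[where f=f, OF odd])
    have "(f (2 *\<^sub>R x) - 8 *\<^sub>R f x) - (1/2::real) *\<^sub>R (f (2 *\<^sub>R (2 *\<^sub>R x)) - 8 *\<^sub>R f (2 *\<^sub>R x))
        = (-1/4::real) *\<^sub>R (2 *\<^sub>R ((f (2 *\<^sub>R (2 *\<^sub>R x)) - 8 *\<^sub>R f (2 *\<^sub>R x)) - 2 *\<^sub>R (f (2 *\<^sub>R x) - 8 *\<^sub>R f x)))"
      by norm
    then have "norm ((f (2 *\<^sub>R x) - 8 *\<^sub>R f x) - (1/2::real) *\<^sub>R (f (2 *\<^sub>R (x /\<^sub>R (1/2::real))) - 8 *\<^sub>R f (x /\<^sub>R (1/2::real))))
        = (1/4) * norm (Dop f x x)"
      unfolding xx D by (simp only: norm_scaleR)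
    then show ?thesis using bound[of x x] unfolding \<psi>_def by linarith
  qed
  have tm: "(1/2::real)^i * \<psi> (x /\<^sub>R (1/2)^i) = (1/2) * ((1/2) ^ Suc i * \<phi> (x /\<^sub>R (1/2) ^ i) (x /\<^sub>R (1/2) ^ i))" for x i
    unfolding \<psi>_def by (simp only: power_Suc)
  have summ': "summable (\<lambda>i. (1/2::real)^i * \<psi> (x /\<^sub>R (1/2)^i))" for x
  proof -
    have "(\<lambda>i. (1/2::real)^(Suc i) * \<psi> (x /\<^sub>R (1/2)^(Suc i))) =
          (\<lambda>i. (1/4) * ((1/2) ^ (Suc i) * \<phi> (x /\<^sub>R (1/2) ^ (Suc i)) (x /\<^sub>R (1/2) ^ (Suc i))))"
      unfolding \<psi>_def by (rule ext) (simp only: mult_ac)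
    then have "summable (\<lambda>i. (1/2::real)^(Suc i) * \<psi> (x /\<^sub>R (1/2)^(Suc i)))"
      using summable_mult[OF summ[of x], of "1/4"] by simp
    then show ?thesis by (rule summable_Suc_iff[THEN iffD1])
  qed
  have sm: "summable (\<lambda>i. (1/2) ^ Suc i * \<phi> (x /\<^sub>R (1/2) ^ i) (x /\<^sub>R (1/2) ^ i))" for x
  proof -
    have "(\<lambda>i. (1/2) ^ Suc i * \<phi> (x /\<^sub>R (1/2) ^ i) (x /\<^sub>R (1/2) ^ i)) = (\<lambda>i. 2 * ((1/2::real)^i * \<psi> (x /\<^sub>R (1/2)^i)))"
      unfolding tm by simp
    then show ?thesis using summable_mult[OF summ'[of x], of 2] by simp
  qed
  have S: "(\<Sum>i. (1/2::real)^i * \<psi> (x /\<^sub>R (1/2)^i)) = 1/2 * (\<Sum>i. (1/2) ^ Suc i * \<phi> (x /\<^sub>R (1/2) ^ i) (x /\<^sub>R (1/2) ^ i))" for x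
    unfolding tm by (rule suminf_mult[OF sm])
  have L: "\<And>x y. (\<lambda>n. (1/2::real)^n * \<phi> (x /\<^sub>R (1/2)^n) (y /\<^sub>R (1/2)^n)) \<longlonglongrightarrow> 0" by (rule lim0)
  obtain A where conv: "\<forall>x. (\<lambda>n. (1/2::real)^n *\<^sub>R (f (2 *\<^sub>R (x /\<^sub>R (1/2)^n)) - 8 *\<^sub>R f (x /\<^sub>R (1/2)^n))) \<longlonglongrightarrow> A x"
    and addA: "Modules.additive A" and DA: "\<forall>x y. Dop A x y = 0"
    and bA: "\<forall>x. norm (f (2 *\<^sub>R x) - 8 *\<^sub>R f x - A x) \<le> (\<Sum>i. (1/2::real)^i * \<psi> (x /\<^sub>R (1/2)^i))"
    and uq: "\<forall>B. Modules.additive B \<and> (\<forall>x. norm (f (2 *\<^sub>R x) - 8 *\<^sub>R f x - B x) \<le> (\<Sum>i. (1/2::real)^i * \<psi> (x /\<^sub>R (1/2)^i))) \<longrightarrow> B = A"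
    using core[where r="1/2" and f=f and \<phi>=\<phi> and \<psi>=\<psi>, OF disjI2[OF refl] odd bound err summ' L]
    apply -
    apply (erule exE)
    apply (erule conjE)+
    apply (rule that)
        apply assumption+
    done
  have e2: "x /\<^sub>R ((1/2::real) ^ Suc n) = 2 *\<^sub>R (x /\<^sub>R (1/2)^n)" for x :: 'a and n
  proof -
    have "inverse ((1/2::real)^Suc n) = 2 * inverse ((1/2)^n)" by (simp add: inverse_eq_divide)
    then show ?thesis by (simp only: scaleR_scaleR)
  qed
  show ?thesis
  proof (rule exI[of _ A], intro conjI allI impI)
    fix x show "(\<lambda>n::nat. (1/2) ^ n *\<^sub>R (f (x /\<^sub>R (1/2) ^ Suc n) - 8 *\<^sub>R f (x /\<^sub>R (1/2) ^ n))) \<longlonglongrightarrow> A x"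
      unfolding e2 by (rule conv[rule_format])
  next
    show "Modules.additive A" by (rule addA)
  next
    fix x y show "Dop A x y = 0" by (rule DA[rule_format])
  next
    fix x show "norm (f (2 *\<^sub>R x) - 8 *\<^sub>R f x - A x) \<le> 1/2 * (\<Sum>i. (1/2) ^ Suc i * \<phi> (x /\<^sub>R (1/2) ^ i) (x /\<^sub>R (1/2) ^ i))"
      using bA[rule_format, of x] unfolding S .
  next
    fix B assume H: "Modules.additive B \<and> (\<forall>x. norm (f (2 *\<^sub>R x) - 8 *\<^sub>R f x - B x) \<le>
          1/2 * (\<Sum>i. (1/2) ^ Suc i * \<phi> (x /\<^sub>R (1/2) ^ i) (x /\<^sub>R (1/2) ^ i)))"
    have "\<forall>x. norm (f (2 *\<^sub>R x) - 8 *\<^sub>R f x - B x) \<le> (\<Sum>i. (1/2::real)^i * \<psi> (x /\<^sub>R (1/2)^i))"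
      using H unfolding S by (rule conjunct2)
    then show "B = A" using uq conjunct1[OF H] by blast
  qed
qed


lemma l1facts:
  "\<And>n::nat. (2::real) powi (1 * int n) = 2^n"
  "\<And>n::nat. (2::real) powi (1 * (int n - 1)) = 2^n / 2"
  "\<And>i::nat. (2::real) powi (int (Suc i) * 1) = 2^Suc i"
  "\<And>i::nat. (2::real) powi (int (i + nat (\<bar>1 - 1\<bar> div 2)) * 1) = 2^i"
  "\<And>i::nat. (2::real) powi (1 * (int (i + nat (\<bar>1 - 1\<bar> div 2)) + 1)) = 2^Suc i"
proof -
  show "\<And>n::nat. (2::real) powi (1 * int n) = 2^n" by simp
  show "\<And>n::nat. (2::real) powi (1 * (int n - 1)) = 2^n / 2" by (simp add: power_int_diff)
  show "\<And>i::nat. (2::real) powi (int (Suc i) * 1) = 2^Suc i" by (simp del: of_nat_Suc)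
  show "\<And>i::nat. (2::real) powi (int (i + nat (\<bar>1 - 1\<bar> div 2)) * 1) = 2^i" by simp
  fix i :: nat
  have "1 * (int (i + nat (\<bar>1 - 1\<bar> div 2)) + 1) = int (Suc i)" by simp
  then show "(2::real) powi (1 * (int (i + nat (\<bar>1 - 1\<bar> div 2)) + 1)) = 2^Suc i"
    by (simp only: power_int_of_nat)
qed

lemma lm1facts:
  "\<And>n::nat. (-1) * int n = - int n"
  "\<And>n::nat. (-1) * (int n - -1) = - int (Suc n)"
  "\<And>i::nat. int (Suc i) * -1 = - int (Suc i)"
  "\<And>i::nat. int (i + nat (\<bar>-1 - 1\<bar> div 2)) * -1 = - int (Suc i)"
  "\<And>i::nat. (-1) * (int (i + nat (\<bar>-1 - 1\<bar> div 2)) + -1) = - int i"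
  "\<And>k::nat. (2::real) powi (- int k) = (1/2)^k"
  by (simp_all add: power_int_minus power_one_over inverse_eq_divide)

theorem theorem3p1:
  fixes f :: "'a::real_normed_vector \<Rightarrow> 'b::banach"
    and \<phi> :: "'a \<Rightarrow> 'a \<Rightarrow> real"
    and l :: int
  assumes l: "l \<in> {-1, 1}"
    and odd: "\<And>x. f (- x) = - f x"
    and phi_nonneg: "\<And>x y. \<phi> x y \<ge> 0"
    and bound: "\<And>x y. norm (Dop f x y) \<le> \<phi> x y"
    and summ: "\<And>x. summable (\<lambda>i::nat. 2 powi (int (Suc i) * l) *
                  \<phi> (x /\<^sub>R 2 powi (int (Suc i) * l)) (x /\<^sub>R 2 powi (int (Suc i) * l)))"
    and lim0: "\<And>x y. (\<lambda>n::nat. 2 powi (l * int n) *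
                  \<phi> (x /\<^sub>R 2 powi (l * int n)) (y /\<^sub>R 2 powi (l * int n))) \<longlonglongrightarrow> 0"
  shows "\<exists>A :: 'a \<Rightarrow> 'b.
     (\<forall>x. (\<lambda>n::nat. 2 powi (l * int n) *\<^sub>R
              (f (x /\<^sub>R 2 powi (l * (int n - l))) - 8 *\<^sub>R f (x /\<^sub>R 2 powi (l * int n))))
            \<longlonglongrightarrow> A x)
   \<and> Modules.additive A
   \<and> (\<forall>x y. 3 *\<^sub>R A (x + 3 *\<^sub>R y) - A (3 *\<^sub>R x + y) =
              12 *\<^sub>R (A (x + y) + A (x - y)) - 16 *\<^sub>R (A x + A y)
              + 12 *\<^sub>R A (2 *\<^sub>R y) - 4 *\<^sub>R A (2 *\<^sub>R x))
   \<and> (\<forall>x. norm (f (2 *\<^sub>R x) - 8 *\<^sub>R f x - A x) \<le>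
          1/2 * (\<Sum>i. 2 powi (int (i + nat (\<bar>l - 1\<bar> div 2)) * l) *
             \<phi> (x /\<^sub>R 2 powi (l * (int (i + nat (\<bar>l - 1\<bar> div 2)) + l)))
               (x /\<^sub>R 2 powi (l * (int (i + nat (\<bar>l - 1\<bar> div 2)) + l)))))
   \<and> (\<forall>B :: 'a \<Rightarrow> 'b. Modules.additive B
        \<and> (\<forall>x y. 3 *\<^sub>R B (x + 3 *\<^sub>R y) - B (3 *\<^sub>R x + y) =
              12 *\<^sub>R (B (x + y) + B (x - y)) - 16 *\<^sub>R (B x + B y)
              + 12 *\<^sub>R B (2 *\<^sub>R y) - 4 *\<^sub>R B (2 *\<^sub>R x))
        \<and> (\<forall>x. norm (f (2 *\<^sub>R x) - 8 *\<^sub>R f x - B x) \<le>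
          1/2 * (\<Sum>i. 2 powi (int (i + nat (\<bar>l - 1\<bar> div 2)) * l) *
             \<phi> (x /\<^sub>R 2 powi (l * (int (i + nat (\<bar>l - 1\<bar> div 2)) + l)))
               (x /\<^sub>R 2 powi (l * (int (i + nat (\<bar>l - 1\<bar> div 2)) + l)))))
        \<longrightarrow> B = A)"
  proof -
  from l have "l = 1 \<or> l = -1" by auto
  then show ?thesis
  proof
    assume l1: "l = 1"
    have summ1: "\<And>x. summable (\<lambda>i::nat. 2 ^ (Suc i) * \<phi> (x /\<^sub>R 2 ^ (Suc i)) (x /\<^sub>R 2 ^ (Suc i)))"
      using summ unfolding l1 l1facts .
    have lim1: "\<And>x y. (\<lambda>n::nat. 2 ^ n * \<phi> (x /\<^sub>R 2 ^ n) (y /\<^sub>R 2 ^ n)) \<longlonglongrightarrow> 0"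
      using lim0 unfolding l1 l1facts .
    obtain A where conv: "\<forall>x. (\<lambda>n::nat. 2 ^ n *\<^sub>R
              (f (x /\<^sub>R (2 ^ n / 2)) - 8 *\<^sub>R f (x /\<^sub>R 2 ^ n))) \<longlonglongrightarrow> A x"
      and addA: "Modules.additive A" and DA: "\<forall>x y. Dop A x y = 0"
      and bA: "\<forall>x. norm (f (2 *\<^sub>R x) - 8 *\<^sub>R f x - A x) \<le>
          1/2 * (\<Sum>i. 2 ^ i * \<phi> (x /\<^sub>R 2 ^ Suc i) (x /\<^sub>R 2 ^ Suc i))"
      and uq: "\<forall>B :: 'a \<Rightarrow> 'b. Modules.additive B
        \<and> (\<forall>x. norm (f (2 *\<^sub>R x) - 8 *\<^sub>R f x - B x) \<le>
          1/2 * (\<Sum>i. 2 ^ i * \<phi> (x /\<^sub>R 2 ^ Suc i) (x /\<^sub>R 2 ^ Suc i)))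
        \<longrightarrow> B = A"
      using case_pos[OF odd phi_nonneg bound summ1 lim1]
      apply -
      apply (erule exE)
      apply (erule conjE)+
      apply (rule that)
          apply assumption+
      done
    show ?thesis unfolding l1 l1facts
    proof (rule exI[of _ A], intro conjI allI impI)
      fix x show "(\<lambda>n::nat. 2 ^ n *\<^sub>R (f (x /\<^sub>R (2 ^ n / 2)) - 8 *\<^sub>R f (x /\<^sub>R 2 ^ n))) \<longlonglongrightarrow> A x"
        using conv by blast
    next
      show "Modules.additive A" by (rule addA)
    next
      fix x y show "3 *\<^sub>R A (x + 3 *\<^sub>R y) - A (3 *\<^sub>R x + y) =
              12 *\<^sub>R (A (x + y) + A (x - y)) - 16 *\<^sub>R (A x + A y)
              + 12 *\<^sub>R A (2 *\<^sub>R y) - 4 *\<^sub>R A (2 *\<^sub>R x)"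
        using DA by (intro eqn_of_Dop) blast
    next
      fix x show "norm (f (2 *\<^sub>R x) - 8 *\<^sub>R f x - A x) \<le> 1/2 * (\<Sum>i. 2 ^ i * \<phi> (x /\<^sub>R 2 ^ Suc i) (x /\<^sub>R 2 ^ Suc i))"
        using bA by blast
    next
      fix B :: "'a \<Rightarrow> 'b"
      assume H: "Modules.additive B \<and>
        (\<forall>x y. 3 *\<^sub>R B (x + 3 *\<^sub>R y) - B (3 *\<^sub>R x + y) =
              12 *\<^sub>R (B (x + y) + B (x - y)) - 16 *\<^sub>R (B x + B y)
              + 12 *\<^sub>R B (2 *\<^sub>R y) - 4 *\<^sub>R B (2 *\<^sub>R x)) \<and>
        (\<forall>x. norm (f (2 *\<^sub>R x) - 8 *\<^sub>R f x - B x) \<le> 1/2 * (\<Sum>i. 2 ^ i * \<phi> (x /\<^sub>R 2 ^ Suc i) (x /\<^sub>R 2 ^ Suc i)))"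
      then show "B = A" using uq by blast
    qed
  next
    assume l1: "l = -1"
    have summ1: "\<And>x. summable (\<lambda>i::nat. (1/2) ^ (Suc i) * \<phi> (x /\<^sub>R (1/2) ^ (Suc i)) (x /\<^sub>R (1/2) ^ (Suc i)))"
      using summ unfolding l1 lm1facts .
    have lim1: "\<And>x y. (\<lambda>n::nat. (1/2) ^ n * \<phi> (x /\<^sub>R (1/2) ^ n) (y /\<^sub>R (1/2) ^ n)) \<longlonglongrightarrow> 0"
      using lim0 unfolding l1 lm1facts .
    obtain A where conv: "\<forall>x. (\<lambda>n::nat. (1/2) ^ n *\<^sub>R
              (f (x /\<^sub>R (1/2) ^ Suc n) - 8 *\<^sub>R f (x /\<^sub>R (1/2) ^ n))) \<longlonglongrightarrow> A x"
      and addA: "Modules.additive A" and DA: "\<forall>x y. Dop A x y = 0"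
      and bA: "\<forall>x. norm (f (2 *\<^sub>R x) - 8 *\<^sub>R f x - A x) \<le>
          1/2 * (\<Sum>i. (1/2) ^ Suc i * \<phi> (x /\<^sub>R (1/2) ^ i) (x /\<^sub>R (1/2) ^ i))"
      and uq: "\<forall>B :: 'a \<Rightarrow> 'b. Modules.additive B
        \<and> (\<forall>x. norm (f (2 *\<^sub>R x) - 8 *\<^sub>R f x - B x) \<le>
          1/2 * (\<Sum>i. (1/2) ^ Suc i * \<phi> (x /\<^sub>R (1/2) ^ i) (x /\<^sub>R (1/2) ^ i)))
        \<longrightarrow> B = A"
      using case_neg[OF odd phi_nonneg bound summ1 lim1]
      apply -
      apply (erule exE)
      apply (erule conjE)+
      apply (rule that)
          apply assumption+
      done
    show ?thesis unfolding l1 lm1facts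
    proof (rule exI[of _ A], intro conjI allI impI)
      fix x show "(\<lambda>n::nat. (1/2) ^ n *\<^sub>R (f (x /\<^sub>R (1/2) ^ Suc n) - 8 *\<^sub>R f (x /\<^sub>R (1/2) ^ n))) \<longlonglongrightarrow> A x"
        using conv by blast
    next
      show "Modules.additive A" by (rule addA)
    next
      fix x y show "3 *\<^sub>R A (x + 3 *\<^sub>R y) - A (3 *\<^sub>R x + y) =
              12 *\<^sub>R (A (x + y) + A (x - y)) - 16 *\<^sub>R (A x + A y)
              + 12 *\<^sub>R A (2 *\<^sub>R y) - 4 *\<^sub>R A (2 *\<^sub>R x)"
        using DA by (intro eqn_of_Dop) blast
    next
      fix x show "norm (f (2 *\<^sub>R x) - 8 *\<^sub>R f x - A x) \<le> 1/2 * (\<Sum>i. (1/2) ^ Suc i * \<phi> (x /\<^sub>R (1/2) ^ i) (x /\<^sub>R (1/2) ^ i))"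
        using bA by blast
    next
      fix B :: "'a \<Rightarrow> 'b"
      assume H: "Modules.additive B \<and>
        (\<forall>x y. 3 *\<^sub>R B (x + 3 *\<^sub>R y) - B (3 *\<^sub>R x + y) =
              12 *\<^sub>R (B (x + y) + B (x - y)) - 16 *\<^sub>R (B x + B y)
              + 12 *\<^sub>R B (2 *\<^sub>R y) - 4 *\<^sub>R B (2 *\<^sub>R x)) \<and>
        (\<forall>x. norm (f (2 *\<^sub>R x) - 8 *\<^sub>R f x - B x) \<le> 1/2 * (\<Sum>i. (1/2) ^ Suc i * \<phi> (x /\<^sub>R (1/2) ^ i) (x /\<^sub>R (1/2) ^ i)))"
      then show "B = A" using uq by blast
    qed
  qed
qed

end
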